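(* Let $S$ be a semigroup that satisfies the F\o lner condition but not the proper F\o lner condition. Then there is $a\in S$ with $|Sa|<\infty$.
   Context: $S$ satisfies the F\o lner condition if for every $\varepsilon>0$ and finite $\mathcal F\subseteq S$ there is a finite non-empty $F\subseteq S$ with $|sF\cup F|\le(1+\varepsilon)|F|$ for all $s\in\mathcal F$ (where $sF=\{sf:f\in F\}$). $S$ satisfies the proper F\o lner condition if moreover for every $\varepsilon>0$, finite $\mathcal F\subseteq S$ and finite $A\subseteq S$, such an $F$ can be chosen with $A\subseteq F$. $Sa=\{sa:s\in S\}$. *)

theory Defs
  imports Complex_Main
begin

text \<open>The semigroup S is the whole carrier type 'a of class semigroup_mult.\<close>

definition left_translate :: "'a::semigroup_mult \<Rightarrow> 'a set \<Rightarrow> 'a set" where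
  "left_translate s F = (\<lambda>f. s * f) ` F"

definition folner_condition :: "'a::semigroup_mult itself \<Rightarrow> bool" where
  "folner_condition _ \<longleftrightarrow>
     (\<forall>(\<epsilon>::real) > 0. \<forall>\<F> :: 'a set. finite \<F> \<longrightarrow>
        (\<exists>F :: 'a set. finite F \<and> F \<noteq> {} \<and>
           (\<forall>s\<in>\<F>. real (card (left_translate s F \<union> F)) \<le> (1 + \<epsilon>) * real (card F))))"

definition proper_folner_condition :: "'a::semigroup_mult itself \<Rightarrow> bool" where
  "proper_folner_condition _ \<longleftrightarrow>
     (\<forall>(\<epsilon>::real) > 0. \<forall>\<F> :: 'a set. \<forall>A :: 'a set. finite \<F> \<longrightarrow> finite A \<longrightarrow>
        (\<exists>F :: 'a set. finite F \<and> F \<noteq> {} \<and> A \<subseteq> F \<and>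
           (\<forall>s\<in>\<F>. real (card (left_translate s F \<union> F)) \<le> (1 + \<epsilon>) * real (card F))))"

end

theory Submission
  imports Defs
begin

definition tinv :: "'a::semigroup_mult set \<Rightarrow> 'a set \<Rightarrow> bool" where
  "tinv T H \<longleftrightarrow> finite H \<and> H \<noteq> {} \<and> (\<forall>t\<in>T. \<forall>h\<in>H. t * h \<in> H)"

lemma card_lt_le: "finite A \<Longrightarrow> card (left_translate s A) \<le> card A"
  unfolding left_translate_def by (rule card_image_le)

lemma lt_Un: "left_translate s (X \<union> Y) = left_translate s X \<union> left_translate s Y"
  unfolding left_translate_def by auto

lemma bound_lemma:
  fixes \<epsilon> :: real and A \<F> T H :: "'a::semigroup_mult set"
  assumes ep: "\<epsilon> > 0" and fA: "finite A"
    and bad: "\<And>F. finite F \<Longrightarrow> F \<noteq> {} \<Longrightarrow> A \<subseteq> F \<Longrightarrow>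
        \<exists>s\<in>\<F>. real (card (left_translate s F \<union> F)) > (1+\<epsilon>) * real (card F)"
    and sub: "\<F> \<subseteq> T" and inv: "tinv T H"
  shows "real (card H) < real (card A) / \<epsilon>"
proof (rule ccontr)
  assume "\<not> ?thesis"
  hence hb: "real (card A) \<le> \<epsilon> * real (card H)" using ep by (simp add: not_less field_simps)
  let ?F = "H \<union> A"
  have fin: "finite ?F" "?F \<noteq> {}" "A \<subseteq> ?F" using inv fA by (auto simp: tinv_def)
  obtain s where s: "s \<in> \<F>" and gt: "real (card (left_translate s ?F \<union> ?F)) > (1+\<epsilon>) * real (card ?F)"
    using bad[OF fin] by blast
  have sb: "left_translate s ?F \<union> ?F \<subseteq> ?F \<union> left_translate s A"
    using inv s sub unfolding tinv_def left_translate_def by auto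
  have "card (left_translate s ?F \<union> ?F) \<le> card (?F \<union> left_translate s A)"
    using sb fin fA by (intro card_mono) (auto simp: left_translate_def)
  also have "\<dots> \<le> card ?F + card (left_translate s A)" by (rule card_Un_le)
  finally have c1: "card (left_translate s ?F \<union> ?F) \<le> card ?F + card A"
    using card_lt_le[OF fA, of s] by linarith
  have cH: "card H \<le> card ?F" using fin by (intro card_mono) auto
  have "real (card (left_translate s ?F \<union> ?F)) \<le> real (card ?F) + \<epsilon> * real (card ?F)"
    using c1 hb cH ep
    by (smt (verit, ccfv_SIG) mult_left_mono of_nat_add of_nat_le_iff)
  thus False using gt by (simp add: algebra_simps)
qed

lemma exist_lemma:
  fixes \<epsilon> :: real and A \<F> T :: "'a::semigroup_mult set"
  assumes fol: "folner_condition TYPE('a)"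
    and ep: "\<epsilon> > 0" and fA: "finite A"
    and bad: "\<And>F. finite F \<Longrightarrow> F \<noteq> {} \<Longrightarrow> A \<subseteq> F \<Longrightarrow>
        \<exists>s\<in>\<F>. real (card (left_translate s F \<union> F)) > (1+\<epsilon>) * real (card F)"
    and fT: "finite T" and sub: "\<F> \<subseteq> T"
  shows "\<exists>H. tinv T H"
proof -
  define B where "B = 2 * real (card A) / \<epsilon>"
  define e' where "e' = min (\<epsilon>/2) (1/(B+1))"
  have B0: "B \<ge> 0" using ep by (simp add: B_def)
  have e'pos: "e' > 0" using ep B0 by (simp add: e'_def)
  obtain F where F: "finite F" "F \<noteq> {}"
    and fl: "\<forall>s\<in>T. real (card (left_translate s F \<union> F)) \<le> (1+e') * real (card F)"
    using fol e'pos fT unfolding folner_condition_def by blast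
  have small: "real (card F) < B"
  proof (rule ccontr)
    assume "\<not> ?thesis"
    hence hb: "real (card A) \<le> (\<epsilon>/2) * real (card F)" using ep by (simp add: B_def not_less field_simps)
    let ?G = "F \<union> A"
    have fin: "finite ?G" "?G \<noteq> {}" "A \<subseteq> ?G" using F fA by auto
    obtain s where s: "s \<in> \<F>" and gt: "real (card (left_translate s ?G \<union> ?G)) > (1+\<epsilon>) * real (card ?G)"
      using bad[OF fin] by blast
    have sT: "s \<in> T" using s sub by auto
    let ?X = "left_translate s F \<union> F"
    have fX: "finite ?X" using F by (simp add: left_translate_def)
    have sb: "left_translate s ?G \<union> ?G \<subseteq> ?G \<union> (?X - F) \<union> left_translate s A"
      unfolding left_translate_def by auto
    have "card (left_translate s ?G \<union> ?G) \<le> card (?G \<union> (?X - F) \<union> left_translate s A)"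
      using sb fin fA fX by (intro card_mono) (auto simp: left_translate_def)
    also have "\<dots> \<le> card (?G \<union> (?X - F)) + card (left_translate s A)" by (rule card_Un_le)
    also have "\<dots> \<le> card ?G + card (?X - F) + card (left_translate s A)" using card_Un_le by simp
    finally have c1: "card (left_translate s ?G \<union> ?G) \<le> card ?G + card (?X - F) + card A"
      using card_lt_le[OF fA, of s] by linarith
    have cd: "card (?X - F) = card ?X - card F" using F by (intro card_Diff_subset) auto
    have cle: "card F \<le> card ?X" using fX by (intro card_mono) auto
    have rd: "real (card (?X - F)) = real (card ?X) - real (card F)" using cd cle by simp
    have cF: "card F \<le> card ?G" using fin by (intro card_mono) auto
    have x1: "real (card ?X) \<le> (1+e') * real (card F)" using fl sT by blast
    have "e' * real (card F) \<le> (\<epsilon>/2) * real (card F)"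
      by (intro mult_right_mono) (auto simp: e'_def)
    hence "real (card (left_translate s ?G \<union> ?G)) \<le> real (card ?G) + \<epsilon> * real (card F)"
      using c1 rd x1 hb by (simp add: algebra_simps)
    also have "\<dots> \<le> real (card ?G) + \<epsilon> * real (card ?G)"
      using cF ep by simp
    finally show False using gt by (simp add: algebra_simps)
  qed
  have "e' * real (card F) \<le> (1/(B+1)) * real (card F)"
    by (intro mult_right_mono) (auto simp: e'_def)
  also have "\<dots> < 1" using small B0 by (simp add: field_simps)
  finally have lt1: "e' * real (card F) < 1" .
  have "left_translate s F \<subseteq> F" if sT: "s \<in> T" for s
  proof -
    let ?X = "left_translate s F \<union> F"
    have fX: "finite ?X" using F by (simp add: left_translate_def)
    have x1: "real (card ?X) \<le> (1+e') * real (card F)" using fl sT by blast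
    have "(1+e') * real (card F) = real (card F) + e' * real (card F)" by (simp add: algebra_simps)
    hence "real (card ?X) < real (card F) + 1" using x1 lt1 by linarith
    hence "card ?X \<le> card F" by linarith
    moreover have "card F \<le> card ?X" using fX by (intro card_mono) auto
    ultimately have "F = ?X" using fX by (intro card_subset_eq) auto
    thus ?thesis by blast
  qed
  hence "tinv T F" using F unfolding tinv_def left_translate_def by blast
  thus ?thesis by blast
qed

lemma not_proper_ex: assumes "\<not> proper_folner_condition TYPE('a::semigroup_mult)"
  shows "\<exists>(\<epsilon>::real)>0. \<exists>\<F> A :: 'a set. finite \<F> \<and> finite A \<and> (\<forall>F. finite F \<and> F \<noteq> {} \<and> A \<subseteq> F \<longrightarrow>
        (\<exists>s\<in>\<F>. real (card (left_translate s F \<union> F)) > (1+\<epsilon>) * real (card F)))"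
proof -
  have "\<not> (\<forall>(\<epsilon>::real) > 0. \<forall>\<F> :: 'a set. \<forall>A :: 'a set. finite \<F> \<longrightarrow> finite A \<longrightarrow>
        (\<exists>F :: 'a set. finite F \<and> F \<noteq> {} \<and> A \<subseteq> F \<and>
           (\<forall>s\<in>\<F>. real (card (left_translate s F \<union> F)) \<le> (1 + \<epsilon>) * real (card F))))"
    using assms unfolding proper_folner_condition_def by simp
  then obtain \<epsilon> :: real and \<F> A :: "'a set" where "\<epsilon> > 0" "finite \<F>" "finite A"
    "\<not> (\<exists>F :: 'a set. finite F \<and> F \<noteq> {} \<and> A \<subseteq> F \<and>
           (\<forall>s\<in>\<F>. real (card (left_translate s F \<union> F)) \<le> (1 + \<epsilon>) * real (card F)))"
    by auto
  note h = this
  from h(4) have "\<forall>F. finite F \<and> F \<noteq> {} \<and> A \<subseteq> F \<longrightarrow>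
        (\<exists>s\<in>\<F>. real (card (left_translate s F \<union> F)) > (1+\<epsilon>) * real (card F))"
    by (auto simp: not_le)
  with h(1-3) show ?thesis by blast
qed

theorem mainTheorem9:
  assumes "folner_condition TYPE('a::semigroup_mult)"
    and "\<not> proper_folner_condition TYPE('a)"
  shows "\<exists>a::'a. finite (range (\<lambda>s. s * a))"
proof -
  from not_proper_ex[OF assms(2)] obtain \<epsilon> :: real and \<F> A :: "'a set" where ep: "\<epsilon> > 0" and fF: "finite \<F>"
    and fA: "finite A"
    and bad0: "\<forall>F. finite F \<and> F \<noteq> {} \<and> A \<subseteq> F \<longrightarrow>
        (\<exists>s\<in>\<F>. real (card (left_translate s F \<union> F)) > (1+\<epsilon>) * real (card F))"
    by (elim exE conjE) blast
  have bad: "\<And>F. finite F \<Longrightarrow> F \<noteq> {} \<Longrightarrow> A \<subseteq> F \<Longrightarrow>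
        \<exists>s\<in>\<F>. real (card (left_translate s F \<union> F)) > (1+\<epsilon>) * real (card F)"
    using bad0 by auto
  define c where "c (T::'a set) = Max {card H |H. tinv T H}" for T
  have cprops: "(\<exists>H. tinv T H \<and> card H = c T) \<and> (\<forall>H. tinv T H \<longrightarrow> card H \<le> c T)"
    if fT: "finite T" and sT: "\<F> \<subseteq> T" for T
  proof -
    obtain H0 where H0: "tinv T H0" using exist_lemma[OF assms(1) ep fA bad fT sT] by blast
    have ne: "{card H |H. tinv T H} \<noteq> {}" using H0 by blast
    have "{card H |H. tinv T H} \<subseteq> {..nat \<lceil>real (card A) / \<epsilon>\<rceil>}"
    proof
      fix n assume "n \<in> {card H |H. tinv T H}"
      then obtain H where "tinv T H" "n = card H" by blast
      have b: "real (card H) < real (card A) / \<epsilon>" using bound_lemma[OF ep fA bad sT \<open>tinv T H\<close>] .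
      have "real (card H) \<le> real_of_int \<lceil>real (card A) / \<epsilon>\<rceil>"
        using b le_of_int_ceiling[of "real (card A) / \<epsilon>"] by linarith
      hence "real_of_int (int (card H)) \<le> real_of_int \<lceil>real (card A) / \<epsilon>\<rceil>" by simp
      hence "int (card H) \<le> \<lceil>real (card A) / \<epsilon>\<rceil>" by (simp only: of_int_le_iff)
      thus "n \<in> {..nat \<lceil>real (card A) / \<epsilon>\<rceil>}" using \<open>n = card H\<close> by simp
    qed
    hence fin: "finite {card H |H. tinv T H}" by (rule finite_subset) simp
    have m1: "c T \<in> {card H |H. tinv T H}" unfolding c_def by (rule Max_in[OF fin ne])
    have m2: "card H \<le> c T" if "tinv T H" for H unfolding c_def
      by (rule Max_ge[OF fin]) (use that in blast)
    from m1 obtain H1 where "tinv T H1" "c T = card H1" by blast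
    thus ?thesis using m2 by auto
  qed
  obtain T1 where T1: "finite T1 \<and> \<F> \<subseteq> T1"
    and least: "\<forall>T. finite T \<and> \<F> \<subseteq> T \<longrightarrow> c T1 \<le> c T"
    using ex_has_least_nat[of "\<lambda>T. finite T \<and> \<F> \<subseteq> T" \<F> c] fF by blast
  obtain K where K: "tinv T1 K" "card K = c T1" using cprops T1 by blast
  have maxK: "H \<subseteq> K" if "tinv T1 H" for H
  proof -
    have "tinv T1 (K \<union> H)" using K(1) that unfolding tinv_def by auto
    hence "card (K \<union> H) \<le> c T1" using cprops[of T1] T1 by blast
    hence "card (K \<union> H) \<le> card K" using K(2) by simp
    moreover have "finite (K \<union> H)" using K(1) that by (auto simp: tinv_def)
    moreover have "card K \<le> card (K \<union> H)" using \<open>finite (K \<union> H)\<close> by (intro card_mono) auto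
    ultimately have "K = K \<union> H" by (intro card_subset_eq) auto
    thus ?thesis by blast
  qed
  have inv: "s * k \<in> K" if "k \<in> K" for s k
  proof -
    let ?T = "insert s T1"
    have T': "finite ?T" "\<F> \<subseteq> ?T" using T1 by auto
    obtain K' where K': "tinv ?T K'" "card K' = c ?T" using cprops[OF T'] by blast
    have "tinv T1 K'" using K'(1) unfolding tinv_def by auto
    hence sub: "K' \<subseteq> K" by (rule maxK)
    have "c T1 \<le> c ?T" using least T' by blast
    hence "card K \<le> card K'" using K K' by simp
    moreover have "card K' \<le> card K" using sub K(1) by (intro card_mono) (auto simp: tinv_def)
    ultimately have "K' = K" using sub K(1) by (intro card_subset_eq) (auto simp: tinv_def)
    thus ?thesis using K'(1) that unfolding tinv_def by auto
  qed
  obtain a where a: "a \<in> K" using K(1) unfolding tinv_def by blast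
  have "range (\<lambda>s. s * a) \<subseteq> K" using inv a by auto
  moreover have "finite K" using K(1) by (simp add: tinv_def)
  ultimately show ?thesis by (metis finite_subset)
qed

end
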